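(* Let $p_j>0$, $q_{j+1}>0$, $r_j\ge 0$ ($j\ge 0$) be the one-step transition probabilities of a random walk on $\mathcal{N}=\{0,1,2,\dots\}$ (up-step $p_j$, holding $r_j$, down-step $q_j$ from state $j$), with $q_0:=0$ and $p_j+q_j+r_j=1$ for all $j\ge0$. Let $\pi_0:=1$, $\pi_n:=\frac{p_0\cdots p_{n-1}}{q_1\cdots q_n}$ ($n\ge1$), and define polynomials $Q_n$ by $Q_0(x)=1$, $p_0Q_1(x)=x-r_0$, and $xQ_n(x)=q_nQ_{n-1}(x)+r_nQ_n(x)+p_nQ_{n+1}(x)$ for $n\ge 1$. Let $\psi$ be the unique Borel probability measure on $[-1,1]$ with infinite support with respect to which the $Q_n$ are orthogonal, and let $\eta:=\sup\operatorname{supp}(\psi)$. If \[\sum_{j\ge 0}\frac{1}{p_j\pi_j}\sum_{k=0}^j r_k\pi_k=\infty,\] then $\lim_{n\to\infty}|Q_n(-\eta)/Q_n(\eta)|=\infty$.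
   Context: It is known that $\eta>0$ and that $Q_n(x)>0$ for all $n\ge0$ whenever $x\ge\eta$. *)

theory Defs
  imports "HOL-Analysis.Analysis" "HOL-Probability.Probability"
begin

fun bdQ :: "(nat \<Rightarrow> real) \<Rightarrow> (nat \<Rightarrow> real) \<Rightarrow> (nat \<Rightarrow> real) \<Rightarrow> nat \<Rightarrow> real \<Rightarrow> real" where
  "bdQ p q r 0 x = 1"
| "bdQ p q r (Suc 0) x = (x - r 0) / p 0"
| "bdQ p q r (Suc (Suc n)) x =
     ((x - r (Suc n)) * bdQ p q r (Suc n) x - q (Suc n) * bdQ p q r n x) / p (Suc n)"

definition bdpi :: "(nat \<Rightarrow> real) \<Rightarrow> (nat \<Rightarrow> real) \<Rightarrow> nat \<Rightarrow> real" where
  "bdpi p q n = (\<Prod>i<n. p i) / (\<Prod>i\<in>{1..n}. q i)"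

definition msupport :: "real measure \<Rightarrow> real set" where
  "msupport M = {x. \<forall>e>0. emeasure M (ball x e) > 0}"

end

theory Submission
  imports Defs
begin

lemma bdQ_rec:
  assumes "q 0 = 0" and that: "p n \<noteq> 0"
  shows "p n * bdQ p q r (Suc n) x = (x - r n) * bdQ p q r n x - q n * bdQ p q r (n-1) x"
proof (cases n)
  case 0 then show ?thesis using assms that by simp
next
  case (Suc m) then show ?thesis using that by simp
qed

lemma bdpi_pos:
  assumes "\<And>j. p j > 0" "\<And>j. q (Suc j) > 0"
  shows "bdpi p q n > 0"
proof -
  have "(\<Prod>i<n. p i) > 0" using assms by (simp add: prod_pos)
  moreover have "(\<Prod>i\<in>{1..n}. q i) > 0"
    using assms(2) by (intro prod_pos) (metis atLeastAtMost_iff not0_implies_Suc not_one_le_zero)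
  ultimately show ?thesis unfolding bdpi_def by simp
qed

lemma bdpi_Suc:
  assumes "\<And>j. q (Suc j) > 0"
  shows "bdpi p q (Suc n) * q (Suc n) = bdpi p q n * p n"
proof -
  have "{1..Suc n} = insert (Suc n) {1..n}" by auto
  then have "(\<Prod>i\<in>{1..Suc n}. q i) = q (Suc n) * (\<Prod>i\<in>{1..n}. q i)" by simp
  moreover have "q (Suc n) > 0" using assms by simp
  ultimately show ?thesis unfolding bdpi_def by (simp add: field_simps)
qed

theorem proposition1:
  fixes p q r :: "nat \<Rightarrow> real" and \<psi> :: "real measure" and \<eta> :: real
  assumes p_pos: "\<And>j. p j > 0"
      and q_pos: "\<And>j. q (Suc j) > 0"
      and q0: "q 0 = 0"
      and r_nn: "\<And>j. r j \<ge> 0"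
      and sum1: "\<And>j. p j + q j + r j = 1"
      and psi_prob: "prob_space \<psi>"
      and psi_sets: "sets \<psi> = sets borel"
      and psi_on: "emeasure \<psi> (UNIV - {-1..1}) = 0"
      and psi_inf: "infinite (msupport \<psi>)"
      and psi_orth: "\<And>m n. m \<noteq> n \<Longrightarrow>
                       integral\<^sup>L \<psi> (\<lambda>x. bdQ p q r m x * bdQ p q r n x) = 0"
      and eta_def: "\<eta> = Sup (msupport \<psi>)"
      and eta_pos: "\<eta> > 0"
      and Q_pos: "\<And>n x. x \<ge> \<eta> \<Longrightarrow> bdQ p q r n x > 0"
      and diverge: "\<not> summable (\<lambda>j. 1 / (p j * bdpi p q j) *
                                    (\<Sum>k\<le>j. r k * bdpi p q k))"
  shows "filterlim (\<lambda>n. \<bar>bdQ p q r n (-\<eta>) / bdQ p q r n \<eta>\<bar>) at_top sequentially"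
proof -
  have supp_sub: "msupport \<psi> \<subseteq> {-1..1}"
  proof
    fix x assume xs: "x \<in> msupport \<psi>"
    show "x \<in> {-1..1}"
    proof (rule ccontr)
      assume xn: "x \<notin> {-1..1}"
      define e where "e = (if x > 1 then x - 1 else -1 - x)"
      have e0: "e > 0" using xn unfolding e_def by auto
      have "ball x e \<subseteq> UNIV - {-1..1}"
        using xn unfolding e_def by (auto simp: dist_real_def split: if_splits)
      moreover have "ball x e \<in> sets \<psi>" using psi_sets by simp
      moreover have "UNIV - {-1..1} \<in> sets \<psi>" using psi_sets by simp
      ultimately have "emeasure \<psi> (ball x e) \<le> emeasure \<psi> (UNIV - {-1..1})"
        by (intro emeasure_mono) auto
      then have "emeasure \<psi> (ball x e) = 0" using psi_on by simp
      with xs e0 show False unfolding msupport_def by auto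
    qed
  qed
  have eta1: "\<eta> \<le> 1"
  proof -
    have "msupport \<psi> \<noteq> {}" using psi_inf by auto
    then show ?thesis unfolding eta_def using supp_sub by (intro cSup_least) auto
  qed
  define x where "x = \<eta>"
  define Q where "Q n = bdQ p q r n x" for n
  define R where "R n = (-1)^n * bdQ p q r n (-x)" for n
  define pi where "pi n = bdpi p q n" for n
  have Qpos: "Q n > 0" for n unfolding Q_def x_def using Q_pos by simp
  have pipos: "pi n > 0" for n unfolding pi_def using bdpi_pos p_pos q_pos by blast
  have piS: "pi (Suc n) * q (Suc n) = pi n * p n" for n unfolding pi_def using bdpi_Suc q_pos by blast
  have Qrec: "p n * Q (Suc n) = (x - r n) * Q n - q n * Q (n-1)" for n
    unfolding Q_def using bdQ_rec[of q p n r, OF q0] p_pos[of n] by simp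
  have Rrec: "p n * R (Suc n) = (x + r n) * R n - q n * R (n-1)" for n
  proof (cases n)
    case 0 then show ?thesis unfolding R_def using q0 p_pos by simp (metis less_irrefl)
  next
    case (Suc m)
    have "p n * bdQ p q r (Suc n) (-x) = (-x - r n) * bdQ p q r n (-x) - q n * bdQ p q r (n-1) (-x)"
      using bdQ_rec[of q p n r, OF q0] p_pos[of n] by simp
    then have H: "p n * bdQ p q r (Suc n) (-x) = (-x - r n) * bdQ p q r n (-x) - q n * bdQ p q r m (-x)"
      using Suc by simp
    have e1: "(-1::real)^(Suc n) = (-1)^m" "(-1::real)^n = - ((-1)^m)" "n - 1 = m" using Suc by simp_all
    have "p n * R (Suc n) = (-1)^m * (p n * bdQ p q r (Suc n) (-x))"
      unfolding R_def e1 by (simp only: mult_ac)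
    also have "\<dots> = (-1)^m * ((-x - r n) * bdQ p q r n (-x) - q n * bdQ p q r m (-x))"
      by (simp only: H)
    also have "\<dots> = (x + r n) * R n - q n * R (n-1)"
      unfolding R_def e1 by (simp add: algebra_simps)
    finally show ?thesis .
  qed
  have Qmono: "Q (Suc n) \<le> Q n" for n
  proof (induction n)
    case 0
    have "p 0 * Q 1 = x - r 0" using Qrec[of 0] q0 unfolding Q_def by simp
    moreover have "p 0 + r 0 = 1" using sum1[of 0] q0 by simp
    ultimately have "p 0 * (Q 1 - Q 0) \<le> 0" unfolding Q_def using eta1 x_def by (simp add: algebra_simps)
    then show ?case using p_pos[of 0] by (simp add: mult_le_0_iff)
  next
    case (Suc n)
    have rr: "r (Suc n) = 1 - p (Suc n) - q (Suc n)" using sum1[of "Suc n"] by linarith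
    have "p (Suc n) * (Q (Suc (Suc n)) - Q (Suc n)) = (x - 1) * Q (Suc n) + q (Suc n) * (Q (Suc n) - Q n)"
      using Qrec[of "Suc n"] unfolding rr by (simp add: algebra_simps)
    also have "\<dots> \<le> 0"
    proof -
      have "(x - 1) * Q (Suc n) \<le> 0" using eta1 x_def Qpos[of "Suc n"] by (simp add: mult_le_0_iff)
      moreover have "q (Suc n) * (Q (Suc n) - Q n) \<le> 0" using Suc q_pos[of n] by (simp add: mult_le_0_iff)
      ultimately show ?thesis by simp
    qed
    finally show ?case using p_pos[of "Suc n"] by (simp add: mult_le_0_iff)
  qed
  have Qanti: "Q j \<le> Q k" if "k \<le> j" for j k
    using that by (induction rule: dec_induct) (auto intro: order_trans[OF Qmono])
  define W where "W n = pi n * p n * (R (Suc n) * Q n - Q (Suc n) * R n)" for n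
  have Wform: "W n = 2 * (\<Sum>k\<le>n. r k * pi k * R k * Q k)" for n
  proof (induction n)
    case 0
    have "p 0 * R 1 = x + r 0" "p 0 * Q 1 = x - r 0"
      using Rrec[of 0] Qrec[of 0] q0 unfolding R_def Q_def by simp_all
    moreover have "pi 0 = 1" unfolding pi_def bdpi_def by simp
    ultimately show ?case unfolding W_def R_def Q_def by (simp add: algebra_simps)
  next
    case (Suc n)
    have "W (Suc n) = pi (Suc n) * ((p (Suc n) * R (Suc (Suc n))) * Q (Suc n) - (p (Suc n) * Q (Suc (Suc n))) * R (Suc n))"
      unfolding W_def by (simp add: algebra_simps)
    also have "\<dots> = pi (Suc n) * (2 * r (Suc n) * R (Suc n) * Q (Suc n)) + (pi (Suc n) * q (Suc n)) * (R (Suc n) * Q n - Q (Suc n) * R n)"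
      unfolding Rrec[of "Suc n"] Qrec[of "Suc n"] by (simp add: algebra_simps)
    also have "\<dots> = 2 * r (Suc n) * pi (Suc n) * R (Suc n) * Q (Suc n) + W n"
      unfolding W_def piS by (simp add: algebra_simps)
    finally show ?case using Suc by simp
  qed
  have RgeQ: "\<forall>k\<le>n. Q k \<le> R k" for n
  proof (induction n)
    case 0 then show ?case unfolding Q_def R_def by simp
  next
    case (Suc n)
    have "W n \<ge> 0" unfolding Wform
    proof (rule mult_nonneg_nonneg, simp, rule sum_nonneg)
      fix k assume "k \<in> {..n}"
      then have "Q k \<le> R k" using Suc by auto
      then have "R k \<ge> 0" using Qpos[of k] by linarith
      then show "0 \<le> r k * pi k * R k * Q k" using r_nn[of k] pipos[of k] Qpos[of k] by simp
    qed
    then have "R (Suc n) * Q n \<ge> Q (Suc n) * R n"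
      unfolding W_def using pipos[of n] p_pos[of n]
      by (smt (verit) mult_pos_pos zero_le_mult_iff)
    moreover have "Q (Suc n) * R n \<ge> Q (Suc n) * Q n" using Suc Qpos[of "Suc n"] by simp
    ultimately have "R (Suc n) * Q n \<ge> Q (Suc n) * Q n" by linarith
    then have "R (Suc n) \<ge> Q (Suc n)" using Qpos[of n] by simp
    then show ?case using Suc by (auto simp: le_Suc_eq)
  qed
  then have RQ: "Q k \<le> R k" for k by blast
  define a where "a j = 1 / (p j * pi j) * (\<Sum>k\<le>j. r k * pi k)" for j
  have a_nn: "a j \<ge> 0" for j unfolding a_def using p_pos[of j] pipos[of j] r_nn pipos
    by (intro mult_nonneg_nonneg sum_nonneg) (auto intro: less_imp_le)
  have step: "R (Suc n) / Q (Suc n) - R n / Q n \<ge> 2 * a n" for n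
  proof -
    have W1: "W n \<ge> 2 * (\<Sum>k\<le>n. r k * pi k * (Q n * Q (Suc n)))"
      unfolding Wform
    proof (intro mult_left_mono sum_mono)
      fix k assume "k \<in> {..n}"
      then have kn: "k \<le> n" by simp
      have "Q n * Q (Suc n) \<le> Q k * Q k"
        using Qanti[OF kn] Qanti[of k "Suc n"] kn Qpos[of n] Qpos[of "Suc n"]
        by (intro mult_mono) auto
      also have "\<dots> \<le> R k * Q k" using RQ[of k] Qpos[of k] by simp
      finally show "r k * pi k * (Q n * Q (Suc n)) \<le> r k * pi k * R k * Q k"
        using r_nn[of k] pipos[of k] by (simp add: mult_left_mono mult.assoc)
    qed simp
    have "2 * (\<Sum>k\<le>n. r k * pi k * (Q n * Q (Suc n))) = 2 * (Q n * Q (Suc n)) * (\<Sum>k\<le>n. r k * pi k)"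
      by (simp add: sum_distrib_right sum_distrib_left algebra_simps)
    with W1 have Wge: "W n \<ge> 2 * (Q n * Q (Suc n)) * (\<Sum>k\<le>n. r k * pi k)" by simp
    have "R (Suc n) / Q (Suc n) - R n / Q n = W n / (pi n * p n * Q n * Q (Suc n))"
      unfolding W_def using Qpos[of n] Qpos[of "Suc n"] pipos[of n] p_pos[of n]
      by (simp add: field_simps)
    also have "\<dots> \<ge> 2 * (Q n * Q (Suc n)) * (\<Sum>k\<le>n. r k * pi k) / (pi n * p n * Q n * Q (Suc n))"
      using Wge Qpos[of n] Qpos[of "Suc n"] pipos[of n] p_pos[of n]
      by (intro divide_right_mono) auto
    moreover have "2 * (Q n * Q (Suc n)) * (\<Sum>k\<le>n. r k * pi k) / (pi n * p n * Q n * Q (Suc n)) = 2 * a n"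
      unfolding a_def using Qpos[of n] Qpos[of "Suc n"] pipos[of n] p_pos[of n]
      by (simp add: field_simps)
    ultimately show ?thesis by simp
  qed
  have lower: "R n / Q n \<ge> 1 + 2 * (\<Sum>j<n. a j)" for n
  proof (induction n)
    case 0 then show ?case unfolding R_def Q_def by simp
  next
    case (Suc n) then show ?case using step[of n] by simp
  qed
  have eq: "\<bar>bdQ p q r n (-\<eta>) / bdQ p q r n \<eta>\<bar> = R n / Q n" for n
  proof -
    have "R n \<ge> 0" using RQ[of n] Qpos[of n] by linarith
    then have "\<bar>R n\<bar> = R n" by simp
    moreover have "\<bar>R n\<bar> = \<bar>bdQ p q r n (-\<eta>)\<bar>" unfolding R_def x_def by (simp add: abs_mult power_abs)
    moreover have "\<bar>bdQ p q r n \<eta>\<bar> = Q n" using Qpos[of n] unfolding Q_def x_def by simp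
    ultimately show ?thesis by (simp add: abs_divide)
  qed
  have nsum: "\<not> summable a" using diverge unfolding a_def pi_def .
  show ?thesis unfolding eq filterlim_at_top
  proof
    fix Z :: real
    obtain N where N: "(\<Sum>i<N. a i) > Z" 
    proof (rule ccontr)
      assume "\<not> thesis"
      then have "\<And>n. (\<Sum>i<n. a i) \<le> Z" using that by (meson not_le)
      then have "summable a" using a_nn by (intro summableI_nonneg_bounded) auto
      with nsum show False by simp
    qed
    show "\<forall>\<^sub>F n in sequentially. Z \<le> R n / Q n"
    proof (rule eventually_sequentiallyI[of N])
      fix n assume "N \<le> n"
      then have "(\<Sum>i<N. a i) \<le> (\<Sum>i<n. a i)" using a_nn by (intro sum_mono2) auto
      moreover have "(\<Sum>i<N. a i) \<ge> 0" using a_nn by (intro sum_nonneg) auto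
      ultimately show "Z \<le> R n / Q n" using lower[of n] N by linarith
    qed
  qed
qed

end
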